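(* Suppose $\mathcal{T}'$ is obtained from $\mathcal{T}$ by collapsing two adjacent leaves labeled $D_{P_k,s_k} \circ \dots \circ D_{P_1,s_1}$ and $D_{Q_l,t_l} \circ \dots \circ D_{Q_1,t_1}$, where $s_i < 2\tau(P_i)$ and $t_i < 2\tau(Q_i)$ for all $i$. Then the label of the new leaf of $\mathcal{T}'$ has the form $D_{R_{k+1},u_{k+1}} \circ \cdots \circ D_{R_1,u_1}$, where $u_i < 2 \tau(R_i)$ for all $i$.
   Context: All knots are oriented; for a knot $K$, $K^r$ denotes $K$ with reversed orientation, $O$ denotes the unknot, and $\tau$ is the Ozsváth–Szabó concordance invariant (additive under connected sum). Let $B = B_1\cup B_2\cup B_3$ be the (oriented) Borromean rings. For knots $J,K$ and integers $s,t$, $D_{J,s}(K,t)$ is the knot obtained from $B_3$ by $s$-twisted infection by $J$ along $B_1$ and $t$-twisted infection by $K$ along $B_2$; $D_{J,s}(K)$ means $D_{J,s}(K,0)$, and $D_{J,s}$ is regarded as a satellite operator. (Known result: $\tau(D_{J,s}(K,t)) = 1$ if $s<2\tau(J)$ and $t<2\tau(K)$, $-1$ if $s>2\tau(J)$ and $t>2\tau(K)$, and $0$ otherwise.) A labeled binary tree is a binary tree each of whose leaves is labeled with a satellite operation (here, a composite of operators $D_{J,s}$). A collapse of a labeled tree $\mathcal{T}$ having two adjacent leaves labeled $D_{P_k,s_k} \circ \dots \circ D_{P_1,s_1}$ and $D_{Q_l,t_l} \circ \dots \circ D_{Q_1,t_1}$ produces the labeled tree $\mathcal{T}'$ obtained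 by deleting these two leaves and labeling the new leaf (their former parent) $D_{P_k,s_k} \circ \dots \circ D_{P_1,s_1} \circ D_{R,u}$, where $(R,u) = (Q_1 \# Q_1^r,\ 2t_1)$ if $l=1$, and $(R,u) = (D_{Q_1,t_1} \circ \dots \circ D_{Q_{l-2},t_{l-2}} (D_{Q_{l-1},t_{l-1}}(Q_l \# Q_l^r, 2t_l)),\ 0)$ if $l>1$. *)

theory Defs
  imports Main
begin

(* Knots are modelled abstractly by a type 'k; the knot operations are parameters:
   csum = connected sum, rv = orientation reversal,
   D J s K t = D_{J,s}(K,t).
   A composite satellite operator D_{P_k,s_k} o ... o D_{P_1,s_1} is represented by the
   list [(P_1,s_1), ..., (P_k,s_k)] (innermost operator first). *)

type_synonym 'k label = "('k \<times> int) list"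

definition apply_ops :: "('k \<Rightarrow> int \<Rightarrow> 'k \<Rightarrow> int \<Rightarrow> 'k) \<Rightarrow> 'k label \<Rightarrow> 'k \<Rightarrow> 'k" where
  "apply_ops D ops K = fold (\<lambda>(P, s) X. D P s X 0) ops K"

definition collapse_Ru ::
  "('k \<Rightarrow> 'k \<Rightarrow> 'k) \<Rightarrow> ('k \<Rightarrow> 'k) \<Rightarrow> ('k \<Rightarrow> int \<Rightarrow> 'k \<Rightarrow> int \<Rightarrow> 'k) \<Rightarrow> 'k label \<Rightarrow> 'k \<times> int" where
  "collapse_Ru csum rv D qs =
     (let l = length qs; (Ql, tl) = qs ! (l - 1) in
      if l = 1 then (csum Ql (rv Ql), 2 * tl)
      else (let (Q', t') = qs ! (l - 2) in
            (apply_ops D (rev (take (l - 2) qs)) (D Q' t' (csum Ql (rv Ql)) (2 * tl)), 0)))"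

definition collapse_label ::
  "('k \<Rightarrow> 'k \<Rightarrow> 'k) \<Rightarrow> ('k \<Rightarrow> 'k) \<Rightarrow> ('k \<Rightarrow> int \<Rightarrow> 'k \<Rightarrow> int \<Rightarrow> 'k) \<Rightarrow> 'k label \<Rightarrow> 'k label \<Rightarrow> 'k label" where
  "collapse_label csum rv D ps qs = collapse_Ru csum rv D qs # ps"

datatype 'k ltree = Leaf "'k label" | Node "'k ltree" "'k ltree"

inductive collapses ::
  "('k \<Rightarrow> 'k \<Rightarrow> 'k) \<Rightarrow> ('k \<Rightarrow> 'k) \<Rightarrow> ('k \<Rightarrow> int \<Rightarrow> 'k \<Rightarrow> int \<Rightarrow> 'k) \<Rightarrow>
   'k ltree \<Rightarrow> 'k ltree \<Rightarrow> 'k label \<Rightarrow> 'k label \<Rightarrow> bool"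
  for csum rv D where
  base1: "A \<noteq> [] \<Longrightarrow> B \<noteq> [] \<Longrightarrow>
     collapses csum rv D (Node (Leaf A) (Leaf B)) (Leaf (collapse_label csum rv D A B)) A B"
| base2: "A \<noteq> [] \<Longrightarrow> B \<noteq> [] \<Longrightarrow>
     collapses csum rv D (Node (Leaf B) (Leaf A)) (Leaf (collapse_label csum rv D A B)) A B"
| left: "collapses csum rv D T1 T1' A B \<Longrightarrow> collapses csum rv D (Node T1 T2) (Node T1' T2) A B"
| right: "collapses csum rv D T2 T2' A B \<Longrightarrow> collapses csum rv D (Node T1 T2) (Node T1 T2') A B"

end

theory Submission
  imports Defs
begin

lemma apply_ops_tau:
  assumes tau_D: "\<forall>J s K t. tau (D J s K t) =
        (if s < 2 * tau J \<and> t < 2 * tau K then 1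
         else if s > 2 * tau J \<and> t > 2 * tau K then -1 else 0)"
  shows "\<forall>(P, s) \<in> set ops. s < 2 * tau P \<Longrightarrow> tau K = 1 \<Longrightarrow> tau (apply_ops D ops K) = (1::int)"
proof (induction ops arbitrary: K)
  case Nil then show ?case by (simp add: apply_ops_def)
next
  case (Cons a ops)
  obtain P s where a: "a = (P, s)" by fastforce
  have "tau (D P s K 0) = 1" using Cons.prems a tau_D by auto
  then have "tau (apply_ops D ops (D P s K 0)) = 1" using Cons by auto
  then show ?case using a by (simp add: apply_ops_def)
qed

theorem proposition3p3:
  fixes tau :: "'k \<Rightarrow> int"
    and csum :: "'k \<Rightarrow> 'k \<Rightarrow> 'k"
    and rv :: "'k \<Rightarrow> 'k"
    and D :: "'k \<Rightarrow> int \<Rightarrow> 'k \<Rightarrow> int \<Rightarrow> 'k"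
  assumes tau_add: "\<forall>J K. tau (csum J K) = tau J + tau K"
    and tau_rev: "\<forall>K. tau (rv K) = tau K"
    and tau_D: "\<forall>J s K t. tau (D J s K t) =
        (if s < 2 * tau J \<and> t < 2 * tau K then 1
         else if s > 2 * tau J \<and> t > 2 * tau K then -1 else 0)"
    and coll: "collapses csum rv D T T' A B"
    and hA: "\<forall>(P, s) \<in> set A. s < 2 * tau P"
    and hB: "\<forall>(Q, t) \<in> set B. t < 2 * tau Q"
  shows "length (collapse_label csum rv D A B) = length A + 1 \<and>
         (\<forall>(R, u) \<in> set (collapse_label csum rv D A B). u < 2 * tau R)"
proof -
  have Bne: "B \<noteq> []" using coll by induction auto
  let ?l = "length B"
  obtain Ql tl where ql: "B ! (?l - 1) = (Ql, tl)" by fastforce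
  have "(Ql, tl) \<in> set B" using ql Bne by (metis diff_less length_greater_0_conv nth_mem zero_less_one)
  then have tQ: "tl < 2 * tau Ql" using hB by auto
  have Ru: "snd (collapse_Ru csum rv D B) < 2 * tau (fst (collapse_Ru csum rv D B))"
  proof (cases "?l = 1")
    case True
    then show ?thesis using ql tQ tau_add tau_rev by (simp add: collapse_Ru_def Let_def)
  next
    case False
    with Bne have l2: "?l \<ge> 2" by (cases B) (auto simp: Suc_le_eq)
    obtain Q' t' where q': "B ! (?l - 2) = (Q', t')" by fastforce
    have "(Q', t') \<in> set B" using q' l2 by (metis diff_less nth_mem zero_less_numeral order_less_le_trans zero_less_two)
    then have t': "t' < 2 * tau Q'" using hB by auto
    have in1: "tau (D Q' t' (csum Ql (rv Ql)) (2 * tl)) = 1" using tau_D tau_add tau_rev t' tQ by auto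
    have "\<forall>(P, s) \<in> set (rev (take (?l - 2) B)). s < 2 * tau P" using hB by (auto dest: in_set_takeD)
    then have "tau (apply_ops D (rev (take (?l - 2) B)) (D Q' t' (csum Ql (rv Ql)) (2 * tl))) = 1"
      using apply_ops_tau[OF tau_D] in1 by blast
    then show ?thesis using False ql q' by (simp add: collapse_Ru_def Let_def)
  qed
  show ?thesis using Ru hA by (auto simp: collapse_label_def split: prod.splits)
qed

end
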